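(* For every $n\ge1$, the set $\Theta(\mathcal S^C_{2n}(321))$ equals the set of signed permutations in $B_n$ that avoid all six signed patterns $$321,\quad \bar3\,2\,1,\quad 3\,2\,\bar1,\quad \bar3\,2\,\bar1,\quad 1\,\bar2,\quad \bar1\,\bar2.$$
   Context: $B_n$ is the hyperoctahedral group: bijections $\sigma$ of $\{-n,\dots,-1,1,\dots,n\}$ with $\sigma(-i)=-\sigma(i)$, written as the word $\sigma(1)\cdots\sigma(n)$; $\bar a$ denotes $-a$, and $|\sigma|=|\sigma(1)|\cdots|\sigma(n)|\in\mathcal S_n$. $\mathcal S^C_{2n}(321)$ is the set of $321$-avoiding permutations $\pi\in\mathcal S_{2n}$ that are centrosymmetric, i.e. $\pi(i)+\pi(2n+1-i)=2n+1$ for all $i$. The map $\Theta$ sends a centrosymmetric $\pi\in\mathcal S_{2n}$ to the element of $B_n$ given, for $1\le i\le n$, by $\Theta(\pi)(i)=\pi(n+i)-n$ if $\pi(n+i)>n$ and $\Theta(\pi)(i)=\pi(n+i)-n-1$ otherwise. A signed permutation $\sigma\in B_n$ contains a signed pattern $\tau\in B_k$ if there are indices $1\le i_1<\dots<i_k\le n$ such that $|\sigma(i_1)|\cdots|\sigma(i_k)|$ is order-isomorphic to $|\tau|$ and $\sigma(i_j)$ has the same sign as $\tau(j)$ for each $j$; otherwise $\sigma$ avoids $\tau$. *)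

theory Defs
  imports "HOL-Combinatorics.Permutations"
begin

definition avoids321 :: "(nat \<Rightarrow> nat) \<Rightarrow> nat \<Rightarrow> bool" where
  "avoids321 \<pi> m \<longleftrightarrow>
     \<not> (\<exists>i j l. 1 \<le> i \<and> i < j \<and> j < l \<and> l \<le> m \<and> \<pi> i > \<pi> j \<and> \<pi> j > \<pi> l)"

definition centrosymmetric :: "(nat \<Rightarrow> nat) \<Rightarrow> nat \<Rightarrow> bool" where
  "centrosymmetric \<pi> m \<longleftrightarrow> (\<forall>i\<in>{1..m}. \<pi> i + \<pi> (m + 1 - i) = m + 1)"

definition SC321 :: "nat \<Rightarrow> (nat \<Rightarrow> nat) set" where
  "SC321 n = {\<pi>. \<pi> permutes {1..2*n} \<and> avoids321 \<pi> (2*n) \<and> centrosymmetric \<pi> (2*n)}"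

text \<open>Signed permutations of B_n, represented by their values sigma(1..n) as a function
  nat => int which is 0 outside {1..n}; sigma(-i) = -sigma(i) is implicit.\<close>
definition signed_perms :: "nat \<Rightarrow> (nat \<Rightarrow> int) set" where
  "signed_perms n = {\<sigma>. (\<forall>i. i \<notin> {1..n} \<longrightarrow> \<sigma> i = 0) \<and> (\<forall>i\<in>{1..n}. \<sigma> i \<noteq> 0)
      \<and> bij_betw (\<lambda>i. nat \<bar>\<sigma> i\<bar>) {1..n} {1..n}}"

definition Theta :: "nat \<Rightarrow> (nat \<Rightarrow> nat) \<Rightarrow> (nat \<Rightarrow> int)" where
  "Theta n \<pi> = (\<lambda>i. if i \<in> {1..n} then
       (if \<pi> (n + i) > n then int (\<pi> (n + i)) - int n else int (\<pi> (n + i)) - int n - 1)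
     else 0)"

text \<open>A signed pattern tau in B_k is given as the list [tau(1),...,tau(k)].
  sigma in B_n contains tau if there are positions f 0 < ... < f (k-1) in {1..n} such that
  |sigma(f j)| is order-isomorphic to |tau| and the signs agree.\<close>
definition contains_pattern :: "nat \<Rightarrow> (nat \<Rightarrow> int) \<Rightarrow> int list \<Rightarrow> bool" where
  "contains_pattern n \<sigma> \<tau> \<longleftrightarrow>
     (\<exists>f :: nat \<Rightarrow> nat. strict_mono_on {..<length \<tau>} f \<and> f ` {..<length \<tau>} \<subseteq> {1..n} \<and>
        (\<forall>j<length \<tau>. \<forall>l<length \<tau>. (\<bar>\<sigma> (f j)\<bar> < \<bar>\<sigma> (f l)\<bar> \<longleftrightarrow> \<bar>\<tau> ! j\<bar> < \<bar>\<tau> ! l\<bar>)) \<and>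
        (\<forall>j<length \<tau>. sgn (\<sigma> (f j)) = sgn (\<tau> ! j)))"

definition avoids_pattern :: "nat \<Rightarrow> (nat \<Rightarrow> int) \<Rightarrow> int list \<Rightarrow> bool" where
  "avoids_pattern n \<sigma> \<tau> \<longleftrightarrow> \<not> contains_pattern n \<sigma> \<tau>"

end

theory Submission
  imports Defs
begin

lemma all3: "(\<forall>j<(3::nat). P j) \<longleftrightarrow> P 0 \<and> P 1 \<and> P 2"
  by (auto simp: less_Suc_eq eval_nat_numeral)
lemma all2: "(\<forall>j<(2::nat). P j) \<longleftrightarrow> P 0 \<and> P 1"
  by (auto simp: less_Suc_eq eval_nat_numeral)
lemma len3: "length [a,b,c] = 3" by simp
lemma len2: "length [a,b] = 2" by simp
lemma sm3: "strict_mono_on {..<3::nat} f \<longleftrightarrow> f 0 < f 1 \<and> f 1 < (f 2::nat)"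
  unfolding strict_mono_on_def by (auto simp: less_Suc_eq eval_nat_numeral)
lemma sm2: "strict_mono_on {..<2::nat} f \<longleftrightarrow> f 0 < (f 1::nat)"
  unfolding strict_mono_on_def by (auto simp: less_Suc_eq eval_nat_numeral)

lemma cp3: "contains_pattern n \<sigma> [a,b,c] \<longleftrightarrow> (\<exists>i j l. 1\<le>i \<and> i<j \<and> j<l \<and> l\<le>n \<and>
   (\<bar>\<sigma> i\<bar><\<bar>\<sigma> j\<bar> \<longleftrightarrow> \<bar>a\<bar><\<bar>b\<bar>) \<and> (\<bar>\<sigma> j\<bar><\<bar>\<sigma> i\<bar> \<longleftrightarrow> \<bar>b\<bar><\<bar>a\<bar>) \<and>
   (\<bar>\<sigma> i\<bar><\<bar>\<sigma> l\<bar> \<longleftrightarrow> \<bar>a\<bar><\<bar>c\<bar>) \<and> (\<bar>\<sigma> l\<bar><\<bar>\<sigma> i\<bar> \<longleftrightarrow> \<bar>c\<bar><\<bar>a\<bar>) \<and>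
   (\<bar>\<sigma> j\<bar><\<bar>\<sigma> l\<bar> \<longleftrightarrow> \<bar>b\<bar><\<bar>c\<bar>) \<and> (\<bar>\<sigma> l\<bar><\<bar>\<sigma> j\<bar> \<longleftrightarrow> \<bar>c\<bar><\<bar>b\<bar>) \<and>
   sgn (\<sigma> i) = sgn a \<and> sgn (\<sigma> j) = sgn b \<and> sgn (\<sigma> l) = sgn c)"
  (is "?L \<longleftrightarrow> ?R")
proof
  assume ?L
  then obtain f where f: "strict_mono_on {..<3} f" "f ` {..<3} \<subseteq> {1..n}"
    "\<forall>j<3. \<forall>l<3. (\<bar>\<sigma> (f j)\<bar> < \<bar>\<sigma> (f l)\<bar> \<longleftrightarrow> \<bar>[a,b,c] ! j\<bar> < \<bar>[a,b,c] ! l\<bar>)"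
    "\<forall>j<3. sgn (\<sigma> (f j)) = sgn ([a,b,c] ! j)"
    unfolding contains_pattern_def len3 by blast
  have "f 0 \<in> {1..n}" "f 2 \<in> {1..n}" using subsetD[OF f(2), of "f 0"] subsetD[OF f(2), of "f 2"] by auto
  then show ?R using f(1,3,4) unfolding sm3 all3 by (intro exI[of _ "f 0"] exI[of _ "f 1"] exI[of _ "f 2"]) simp
next
  assume ?R
  then obtain i j l where h: "1\<le>i \<and> i<j \<and> j<l \<and> l\<le>n \<and>
   (\<bar>\<sigma> i\<bar><\<bar>\<sigma> j\<bar> \<longleftrightarrow> \<bar>a\<bar><\<bar>b\<bar>) \<and> (\<bar>\<sigma> j\<bar><\<bar>\<sigma> i\<bar> \<longleftrightarrow> \<bar>b\<bar><\<bar>a\<bar>) \<and>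
   (\<bar>\<sigma> i\<bar><\<bar>\<sigma> l\<bar> \<longleftrightarrow> \<bar>a\<bar><\<bar>c\<bar>) \<and> (\<bar>\<sigma> l\<bar><\<bar>\<sigma> i\<bar> \<longleftrightarrow> \<bar>c\<bar><\<bar>a\<bar>) \<and>
   (\<bar>\<sigma> j\<bar><\<bar>\<sigma> l\<bar> \<longleftrightarrow> \<bar>b\<bar><\<bar>c\<bar>) \<and> (\<bar>\<sigma> l\<bar><\<bar>\<sigma> j\<bar> \<longleftrightarrow> \<bar>c\<bar><\<bar>b\<bar>) \<and>
   sgn (\<sigma> i) = sgn a \<and> sgn (\<sigma> j) = sgn b \<and> sgn (\<sigma> l) = sgn c" by blast
  define f where "f = (\<lambda>k::nat. if k = 0 then i else if k = 1 then j else l)"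
  have f012: "f 0 = i" "f 1 = j" "f (Suc 0) = j" "f 2 = l" by (auto simp: f_def)
  have im: "f ` {..<3} \<subseteq> {1..n}"
  proof
    fix x assume "x \<in> f ` {..<3}"
    then obtain k where "k < 3" "x = f k" by auto
    then show "x \<in> {1..n}" using h by (auto simp: f_def)
  qed
  show ?L unfolding contains_pattern_def len3
    by (rule exI[of _ f]) (use h im in \<open>simp add: sm3 all3 f012\<close>)
qed

lemma cp2: "contains_pattern n \<sigma> [a,b] \<longleftrightarrow> (\<exists>i j. 1\<le>i \<and> i<j \<and> j\<le>n \<and>
   (\<bar>\<sigma> i\<bar><\<bar>\<sigma> j\<bar> \<longleftrightarrow> \<bar>a\<bar><\<bar>b\<bar>) \<and> (\<bar>\<sigma> j\<bar><\<bar>\<sigma> i\<bar> \<longleftrightarrow> \<bar>b\<bar><\<bar>a\<bar>) \<and>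
   sgn (\<sigma> i) = sgn a \<and> sgn (\<sigma> j) = sgn b)"
  (is "?L \<longleftrightarrow> ?R")
proof
  assume ?L
  then obtain f where f: "strict_mono_on {..<2} f" "f ` {..<2} \<subseteq> {1..n}"
    "\<forall>j<2. \<forall>l<2. (\<bar>\<sigma> (f j)\<bar> < \<bar>\<sigma> (f l)\<bar> \<longleftrightarrow> \<bar>[a,b] ! j\<bar> < \<bar>[a,b] ! l\<bar>)"
    "\<forall>j<2. sgn (\<sigma> (f j)) = sgn ([a,b] ! j)"
    unfolding contains_pattern_def len2 by blast
  have "f 0 \<in> {1..n}" "f 1 \<in> {1..n}" using subsetD[OF f(2), of "f 0"] subsetD[OF f(2), of "f 1"] by auto
  then show ?R using f(1,3,4) unfolding sm2 all2 by (intro exI[of _ "f 0"] exI[of _ "f 1"]) simp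
next
  assume ?R
  then obtain i j where h: "1\<le>i \<and> i<j \<and> j\<le>n \<and>
   (\<bar>\<sigma> i\<bar><\<bar>\<sigma> j\<bar> \<longleftrightarrow> \<bar>a\<bar><\<bar>b\<bar>) \<and> (\<bar>\<sigma> j\<bar><\<bar>\<sigma> i\<bar> \<longleftrightarrow> \<bar>b\<bar><\<bar>a\<bar>) \<and>
   sgn (\<sigma> i) = sgn a \<and> sgn (\<sigma> j) = sgn b" by blast
  define f where "f = (\<lambda>k::nat. if k = 0 then i else j)"
  have f012: "f 0 = i" "f 1 = j" "f (Suc 0) = j" by (auto simp: f_def)
  have im: "f ` {..<2} \<subseteq> {1..n}"
  proof
    fix x assume "x \<in> f ` {..<2}"
    then obtain k where "k < 2" "x = f k" by auto
    then show "x \<in> {1..n}" using h by (auto simp: f_def)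
  qed
  show ?L unfolding contains_pattern_def len2
    by (rule exI[of _ f]) (use h im in \<open>simp add: sm2 all2 f012\<close>)
qed

definition hh :: "nat \<Rightarrow> int \<Rightarrow> int" where "hh n x = x + int n + (if x < 0 then 1 else 0)"
definition uu :: "nat \<Rightarrow> (nat \<Rightarrow> int) \<Rightarrow> nat \<Rightarrow> int" where
  "uu n \<sigma> p = (if p \<le> n then - \<sigma> (n+1-p) else \<sigma> (p-n))"
definition u321 :: "nat \<Rightarrow> (nat \<Rightarrow> int) \<Rightarrow> bool" where
  "u321 n \<sigma> \<longleftrightarrow> (\<exists>p q r. 1\<le>p \<and> p<q \<and> q<r \<and> r\<le>2*n \<and> uu n \<sigma> p > uu n \<sigma> q \<and> uu n \<sigma> q > uu n \<sigma> r)"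
definition caseA :: "nat \<Rightarrow> (nat \<Rightarrow> int) \<Rightarrow> bool" where
  "caseA n \<sigma> \<longleftrightarrow> (\<exists>i j l. 1\<le>i \<and> i<j \<and> j<l \<and> l\<le>n \<and> \<sigma> i > \<sigma> j \<and> \<sigma> j > \<sigma> l)"
definition caseB :: "nat \<Rightarrow> (nat \<Rightarrow> int) \<Rightarrow> bool" where
  "caseB n \<sigma> \<longleftrightarrow> (\<exists>i j l. 1\<le>i \<and> i\<le>n \<and> 1\<le>j \<and> j<l \<and> l\<le>n \<and> - \<sigma> i > \<sigma> j \<and> \<sigma> j > \<sigma> l)"

lemma u321_iff: "u321 n \<sigma> \<longleftrightarrow> caseA n \<sigma> \<or> caseB n \<sigma>"
proof
  assume "u321 n \<sigma>"
  then obtain p q r where h: "1\<le>p" "p<q" "q<r" "r\<le>2*n" "uu n \<sigma> p > uu n \<sigma> q" "uu n \<sigma> q > uu n \<sigma> r"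
    unfolding u321_def by blast
  show "caseA n \<sigma> \<or> caseB n \<sigma>"
  proof (cases "r \<le> n")
    case True
    then have "caseA n \<sigma>" unfolding caseA_def using h
      by (intro exI[of _ "n+1-r"] exI[of _ "n+1-q"] exI[of _ "n+1-p"]) (auto simp: uu_def)
    then show ?thesis ..
  next
    case r: False
    show ?thesis
    proof (cases "q \<le> n")
      case True
      then have "caseB n \<sigma>" unfolding caseB_def using h r
        by (intro exI[of _ "r-n"] exI[of _ "n+1-q"] exI[of _ "n+1-p"]) (auto simp: uu_def)
      then show ?thesis ..
    next
      case q: False
      show ?thesis
      proof (cases "p \<le> n")
        case True
        then have "caseB n \<sigma>" unfolding caseB_def using h r q
          by (intro exI[of _ "n+1-p"] exI[of _ "q-n"] exI[of _ "r-n"]) (auto simp: uu_def)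
        then show ?thesis ..
      next
        case False
        then have "caseA n \<sigma>" unfolding caseA_def using h r q
          by (intro exI[of _ "p-n"] exI[of _ "q-n"] exI[of _ "r-n"]) (auto simp: uu_def)
        then show ?thesis ..
      qed
    qed
  qed
next
  assume "caseA n \<sigma> \<or> caseB n \<sigma>"
  then show "u321 n \<sigma>"
  proof
    assume "caseA n \<sigma>"
    then obtain i j l where h: "1\<le>i" "i<j" "j<l" "l\<le>n" "\<sigma> i > \<sigma> j" "\<sigma> j > \<sigma> l"
      unfolding caseA_def by blast
    show ?thesis unfolding u321_def using h
      by (intro exI[of _ "n+i"] exI[of _ "n+j"] exI[of _ "n+l"]) (auto simp: uu_def)
  next
    assume "caseB n \<sigma>"
    then obtain i j l where h: "1\<le>i" "i\<le>n" "1\<le>j" "j<l" "l\<le>n" "- \<sigma> i > \<sigma> j" "\<sigma> j > \<sigma> l"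
      unfolding caseB_def by blast
    show ?thesis unfolding u321_def using h
      by (intro exI[of _ "n+1-i"] exI[of _ "n+j"] exI[of _ "n+l"]) (auto simp: uu_def)
  qed
qed

definition pats :: "nat \<Rightarrow> (nat \<Rightarrow> int) \<Rightarrow> bool" where
  "pats n \<sigma> \<longleftrightarrow> contains_pattern n \<sigma> [3, 2, 1] \<or> contains_pattern n \<sigma> [-3, 2, 1] \<or>
       contains_pattern n \<sigma> [3, 2, -1] \<or> contains_pattern n \<sigma> [-3, 2, -1] \<or>
       contains_pattern n \<sigma> [1, -2] \<or> contains_pattern n \<sigma> [-1, -2]"

lemma pats_imp:
  assumes "pats n \<sigma>"
  shows "caseA n \<sigma> \<or> caseB n \<sigma>"
proof -
  have a: "caseA n \<sigma>" if "contains_pattern n \<sigma> [3, 2, 1] \<or> contains_pattern n \<sigma> [3, 2, -1]"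
  proof -
    have "\<exists>i j l. 1\<le>i \<and> i<j \<and> j<l \<and> l\<le>n \<and> \<sigma> i > \<sigma> j \<and> \<sigma> j > \<sigma> l"
      using that unfolding cp3 by (auto simp: sgn_1_pos sgn_1_neg abs_if) fastforce+
    then obtain i j l where "1\<le>i \<and> i<j \<and> j<l \<and> l\<le>n \<and> \<sigma> i > \<sigma> j \<and> \<sigma> j > \<sigma> l" by blast
    then show ?thesis unfolding caseA_def by blast
  qed
  have b: "caseB n \<sigma>" if "contains_pattern n \<sigma> [-3, 2, 1] \<or> contains_pattern n \<sigma> [-3, 2, -1]"
  proof -
    have "\<exists>i j l. 1\<le>i \<and> i<j \<and> j<l \<and> l\<le>n \<and> - \<sigma> i > \<sigma> j \<and> \<sigma> j > \<sigma> l"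
      using that unfolding cp3 by (auto simp: sgn_1_pos sgn_1_neg abs_if) fastforce+
    then obtain i j l where "1\<le>i \<and> i<j \<and> j<l \<and> l\<le>n \<and> - \<sigma> i > \<sigma> j \<and> \<sigma> j > \<sigma> l" by blast
    then show ?thesis unfolding caseB_def by (intro exI[of _ i] exI[of _ j] exI[of _ l]) auto
  qed
  have c: "caseB n \<sigma>" if "contains_pattern n \<sigma> [1, -2] \<or> contains_pattern n \<sigma> [-1, -2]"
  proof -
    have "\<exists>j l. 1\<le>j \<and> j<l \<and> l\<le>n \<and> - \<sigma> l > \<sigma> j \<and> \<sigma> j > \<sigma> l"
      using that unfolding cp2 by (auto simp: sgn_1_pos sgn_1_neg abs_if) fastforce+
    then obtain j l where "1\<le>j \<and> j<l \<and> l\<le>n \<and> - \<sigma> l > \<sigma> j \<and> \<sigma> j > \<sigma> l" by blast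
    then show ?thesis unfolding caseB_def by (intro exI[of _ l] exI[of _ j] exI[of _ l]) auto
  qed
  show ?thesis using assms a b c unfolding pats_def by blast
qed

lemma imp_pats:
  assumes nz: "\<And>i. 1\<le>i \<Longrightarrow> i\<le>n \<Longrightarrow> \<sigma> i \<noteq> 0"
    and inj: "\<And>i j. 1\<le>i \<Longrightarrow> i\<le>n \<Longrightarrow> 1\<le>j \<Longrightarrow> j\<le>n \<Longrightarrow> \<bar>\<sigma> i\<bar> = \<bar>\<sigma> j\<bar> \<Longrightarrow> i = j"
    and AB: "caseA n \<sigma> \<or> caseB n \<sigma>"
  shows "pats n \<sigma>"
proof (rule ccontr)
  assume N: "\<not> pats n \<sigma>"
  have P5: "\<not> contains_pattern n \<sigma> [1, -2]" and P6: "\<not> contains_pattern n \<sigma> [-1, -2]"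
    and P1: "\<not> contains_pattern n \<sigma> [3, 2, 1]" and P2: "\<not> contains_pattern n \<sigma> [-3, 2, 1]"
    and P3: "\<not> contains_pattern n \<sigma> [3, 2, -1]" and P4: "\<not> contains_pattern n \<sigma> [-3, 2, -1]"
    using N unfolding pats_def by auto
  have key: "\<bar>\<sigma> l\<bar> < \<bar>\<sigma> j\<bar>" if "1\<le>j" "j<l" "l\<le>n" "\<sigma> l < 0" for j l
  proof (rule ccontr)
    assume c: "\<not> \<bar>\<sigma> l\<bar> < \<bar>\<sigma> j\<bar>"
    have "\<bar>\<sigma> j\<bar> \<noteq> \<bar>\<sigma> l\<bar>" using inj[of j l] that by auto
    with c have lt: "\<bar>\<sigma> j\<bar> < \<bar>\<sigma> l\<bar>" by auto
    have "\<sigma> j \<noteq> 0" using nz that by auto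
    then consider "\<sigma> j > 0" | "\<sigma> j < 0" by linarith
    then show False
    proof cases
      case 1
      have "contains_pattern n \<sigma> [1, -2]" unfolding cp2
        by (rule exI[of _ j], rule exI[of _ l]) (use that lt 1 in \<open>auto simp: sgn_1_pos sgn_1_neg\<close>)
      with P5 show False ..
    next
      case 2
      have "contains_pattern n \<sigma> [-1, -2]" unfolding cp2
        by (rule exI[of _ j], rule exI[of _ l]) (use that lt 2 in \<open>auto simp: sgn_1_pos sgn_1_neg\<close>)
      with P6 show False ..
    qed
  qed
  have key2: "\<not> (\<sigma> j > 0 \<and> \<sigma> l < 0 \<and> \<bar>\<sigma> j\<bar> < \<bar>\<sigma> l\<bar>)" if "1\<le>j" "j<l" "l\<le>n" for j l
    using key[of j l] that by auto
  from AB show False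
  proof
    assume "caseA n \<sigma>"
    then obtain i j l where h: "1\<le>i" "i<j" "j<l" "l\<le>n" "\<sigma> i > \<sigma> j" "\<sigma> j > \<sigma> l"
      unfolding caseA_def by blast
    have nzl: "\<sigma> l \<noteq> 0" using nz h by auto
    show False
    proof (cases "\<sigma> l < 0")
      case True
      have k: "\<bar>\<sigma> l\<bar> < \<bar>\<sigma> j\<bar>" using key[of j l] h True by auto
      have "contains_pattern n \<sigma> [3, 2, -1]" unfolding cp3
        by (rule exI[of _ i], rule exI[of _ j], rule exI[of _ l]) (use h True k in \<open>auto simp: sgn_1_pos sgn_1_neg abs_if\<close>)
      with P3 show False ..
    next
      case False
      have "contains_pattern n \<sigma> [3, 2, 1]" unfolding cp3
        by (rule exI[of _ i], rule exI[of _ j], rule exI[of _ l]) (use h False nzl in \<open>auto simp: sgn_1_pos sgn_1_neg abs_if\<close>)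
      with P1 show False ..
    qed
  next
    assume "caseB n \<sigma>"
    then obtain i j l where h: "1\<le>i" "i\<le>n" "1\<le>j" "j<l" "l\<le>n" "- \<sigma> i > \<sigma> j" "\<sigma> j > \<sigma> l"
      unfolding caseB_def by blast
    have nzl: "\<sigma> l \<noteq> 0" using nz h by auto
    have nzj: "\<sigma> j \<noteq> 0" using nz h by auto
    have jpos: "\<sigma> j > 0"
    proof (cases "\<sigma> l < 0")
      case True
      then show ?thesis using key[of j l] h by auto
    next
      case False then show ?thesis using h nzl by auto
    qed
    have ineg: "\<sigma> i < 0" using jpos h by auto
    consider "i < j" | "i = j" | "j < i" by linarith
    then show False
    proof cases
      case 1
      show False
      proof (cases "\<sigma> l < 0")
        case True
        have k: "\<bar>\<sigma> l\<bar> < \<bar>\<sigma> j\<bar>" using key[of j l] h True by auto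
        have "contains_pattern n \<sigma> [-3, 2, -1]" unfolding cp3
          by (rule exI[of _ i], rule exI[of _ j], rule exI[of _ l]) (use h True k 1 jpos ineg in \<open>auto simp: sgn_1_pos sgn_1_neg abs_if\<close>)
        with P4 show False ..
      next
        case False
        have "contains_pattern n \<sigma> [-3, 2, 1]" unfolding cp3
          by (rule exI[of _ i], rule exI[of _ j], rule exI[of _ l]) (use h False nzl 1 jpos ineg in \<open>auto simp: sgn_1_pos sgn_1_neg abs_if\<close>)
        with P2 show False ..
      qed
    next
      case 2 then show False using jpos ineg by simp
    next
      case 3
      show False using key2[of j i] 3 h jpos ineg by auto
    qed
  qed
qed

lemma endo_bij:
  assumes "inj_on f {1..n::nat}" "f ` {1..n} \<subseteq> {1..n}"
  shows "bij_betw f {1..n} {1..n}"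
proof -
  have "card (f ` {1..n}) = card {1..n}" using card_image[OF assms(1)] .
  then have "f ` {1..n} = {1..n}" using card_subset_eq[OF _ assms(2)] by simp
  then show ?thesis using assms(1) unfolding bij_betw_def by simp
qed

lemma hh_less: "x \<noteq> 0 \<Longrightarrow> y \<noteq> 0 \<Longrightarrow> hh n x < hh n y \<longleftrightarrow> x < y"
  by (auto simp: hh_def)
lemma hh_eq: "x \<noteq> 0 \<Longrightarrow> y \<noteq> 0 \<Longrightarrow> hh n x = hh n y \<longleftrightarrow> x = y"
  by (auto simp: hh_def)
lemma hh_neg: "x \<noteq> 0 \<Longrightarrow> hh n x + hh n (-x) = 2 * int n + 1"
  by (auto simp: hh_def)
lemma hh_range: "x \<noteq> 0 \<Longrightarrow> \<bar>x\<bar> \<le> int n \<Longrightarrow> 1 \<le> hh n x \<and> hh n x \<le> 2 * int n"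
  by (auto simp: hh_def)

lemma sp_facts:
  assumes "\<sigma> \<in> signed_perms n"
  shows sp_zero: "\<And>i. i \<notin> {1..n} \<Longrightarrow> \<sigma> i = 0"
    and sp_nz: "\<And>i. i \<in> {1..n} \<Longrightarrow> \<sigma> i \<noteq> 0"
    and sp_le: "\<And>i. i \<in> {1..n} \<Longrightarrow> \<bar>\<sigma> i\<bar> \<le> int n"
    and sp_inj: "\<And>i j. i \<in> {1..n} \<Longrightarrow> j \<in> {1..n} \<Longrightarrow> \<bar>\<sigma> i\<bar> = \<bar>\<sigma> j\<bar> \<Longrightarrow> i = j"
proof -
  have b: "bij_betw (\<lambda>i. nat \<bar>\<sigma> i\<bar>) {1..n} {1..n}" using assms unfolding signed_perms_def by blast
  show "\<And>i. i \<notin> {1..n} \<Longrightarrow> \<sigma> i = 0" "\<And>i. i \<in> {1..n} \<Longrightarrow> \<sigma> i \<noteq> 0"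
    using assms unfolding signed_perms_def by blast+
  show "\<bar>\<sigma> i\<bar> \<le> int n" if "i \<in> {1..n}" for i
  proof -
    have "nat \<bar>\<sigma> i\<bar> \<in> {1..n}" using bij_betwE[OF b] that by blast
    then show ?thesis by auto
  qed
  show "i = j" if "i \<in> {1..n}" "j \<in> {1..n}" "\<bar>\<sigma> i\<bar> = \<bar>\<sigma> j\<bar>" for i j
    using inj_onD[OF bij_betw_imp_inj_on[OF b] _ that(1,2)] that(3) by simp
qed

lemma uu_nz: assumes s: "\<sigma> \<in> signed_perms n" and p: "p \<in> {1..2*n}" shows "uu n \<sigma> p \<noteq> 0"
proof (cases "p \<le> n")
  case True
  then have "n+1-p \<in> {1..n}" using p by auto
  then show ?thesis using sp_nz[OF s] True by (simp add: uu_def)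
next
  case False
  then have "p-n \<in> {1..n}" using p by auto
  then show ?thesis using sp_nz[OF s] False by (simp add: uu_def)
qed
lemma uu_le: assumes s: "\<sigma> \<in> signed_perms n" and p: "p \<in> {1..2*n}" shows "\<bar>uu n \<sigma> p\<bar> \<le> int n"
proof (cases "p \<le> n")
  case True
  then have "n+1-p \<in> {1..n}" using p by auto
  then show ?thesis using sp_le[OF s] True by (simp add: uu_def)
next
  case False
  then have "p-n \<in> {1..n}" using p by auto
  then show ?thesis using sp_le[OF s] False by (simp add: uu_def)
qed
lemma uu_sym: "p \<in> {1..2*n} \<Longrightarrow> uu n \<sigma> (2*n+1-p) = - uu n \<sigma> p"
  by (auto simp: uu_def Suc_diff_le)

lemma uu_inj:
  assumes s: "\<sigma> \<in> signed_perms n" and p: "p \<in> {1..2*n}" and q: "q \<in> {1..2*n}" and e: "uu n \<sigma> p = uu n \<sigma> q"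
  shows "p = q"
proof (cases "p \<le> n")
  case pT: True
  show ?thesis
  proof (cases "q \<le> n")
    case True
    then have "\<bar>\<sigma> (n+1-p)\<bar> = \<bar>\<sigma> (n+1-q)\<bar>" using e pT by (simp add: uu_def)
    moreover have "n+1-p \<in> {1..n}" "n+1-q \<in> {1..n}" using p q pT True by auto
    ultimately have "n+1-p = n+1-q" using sp_inj[OF s, of "n+1-p" "n+1-q"] by blast
    then show ?thesis using p q pT True by auto
  next
    case False
    then have e2: "- \<sigma> (n+1-p) = \<sigma> (q-n)" using e pT by (simp add: uu_def)
    moreover have "n+1-p \<in> {1..n}" "q-n \<in> {1..n}" using p q pT False by auto
    ultimately have "n+1-p = q-n" using sp_inj[OF s, of "n+1-p" "q-n"] by force
    then have "\<sigma> (n+1-p) = 0" using e2 by simp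
    moreover have "n+1-p \<in> {1..n}" using p pT by auto
    ultimately show ?thesis using sp_nz[OF s, of "n+1-p"] by blast
  qed
next
  case pF: False
  show ?thesis
  proof (cases "q \<le> n")
    case True
    then have e2: "\<sigma> (p-n) = - \<sigma> (n+1-q)" using e pF by (simp add: uu_def)
    moreover have "p-n \<in> {1..n}" "n+1-q \<in> {1..n}" using p q pF True by auto
    ultimately have "p-n = n+1-q" using sp_inj[OF s, of "p-n" "n+1-q"] by force
    then have "\<sigma> (p-n) = 0" using e2 by simp
    moreover have "p-n \<in> {1..n}" using p pF by auto
    ultimately show ?thesis using sp_nz[OF s, of "p-n"] by blast
  next
    case False
    then have "\<bar>\<sigma> (p-n)\<bar> = \<bar>\<sigma> (q-n)\<bar>" using e pF by (simp add: uu_def)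
    moreover have "p-n \<in> {1..n}" "q-n \<in> {1..n}" using p q pF False by auto
    ultimately have "p-n = q-n" using sp_inj[OF s, of "p-n" "q-n"] by blast
    then show ?thesis using p q pF False by auto
  qed
qed

lemma avoid_equiv:
  assumes h: "\<And>p. p \<in> {1..2*n} \<Longrightarrow> int (\<pi> p) = hh n (uu n \<sigma> p)"
    and nz: "\<And>p. p \<in> {1..2*n} \<Longrightarrow> uu n \<sigma> p \<noteq> 0"
  shows "avoids321 \<pi> (2*n) \<longleftrightarrow> \<not> u321 n \<sigma>"
proof -
  have lt: "\<pi> p < \<pi> q \<longleftrightarrow> uu n \<sigma> p < uu n \<sigma> q" if "p \<in> {1..2*n}" "q \<in> {1..2*n}" for p q
  proof -
    have "\<pi> p < \<pi> q \<longleftrightarrow> int (\<pi> p) < int (\<pi> q)" by simp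
    also have "\<dots> \<longleftrightarrow> hh n (uu n \<sigma> p) < hh n (uu n \<sigma> q)" using h that by simp
    also have "\<dots> \<longleftrightarrow> uu n \<sigma> p < uu n \<sigma> q" using hh_less nz that by blast
    finally show ?thesis .
  qed
  show ?thesis
  proof
    assume a: "avoids321 \<pi> (2*n)"
    show "\<not> u321 n \<sigma>"
    proof
      assume "u321 n \<sigma>"
      then obtain p q r where pqr: "1\<le>p" "p<q" "q<r" "r\<le>2*n" "uu n \<sigma> p > uu n \<sigma> q" "uu n \<sigma> q > uu n \<sigma> r"
        unfolding u321_def by blast
      then have "\<pi> p > \<pi> q" "\<pi> q > \<pi> r" using lt[of q p] lt[of r q] by auto
      then show False using a pqr unfolding avoids321_def by blast
    qed
  next
    assume a: "\<not> u321 n \<sigma>"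
    show "avoids321 \<pi> (2*n)" unfolding avoids321_def
    proof
      assume "\<exists>i j l. 1 \<le> i \<and> i < j \<and> j < l \<and> l \<le> 2*n \<and> \<pi> i > \<pi> j \<and> \<pi> j > \<pi> l"
      then obtain p q r where pqr: "1\<le>p" "p<q" "q<r" "r\<le>2*n" "\<pi> p > \<pi> q" "\<pi> q > \<pi> r" by blast
      then have "uu n \<sigma> p > uu n \<sigma> q" "uu n \<sigma> q > uu n \<sigma> r" using lt[of q p] lt[of r q] by auto
      then show False using a pqr unfolding u321_def by blast
    qed
  qed
qed

definition piOf :: "nat \<Rightarrow> (nat \<Rightarrow> int) \<Rightarrow> nat \<Rightarrow> nat" where
  "piOf n \<sigma> p = (if p \<in> {1..2*n} then nat (hh n (uu n \<sigma> p)) else p)"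

lemma piOf_int:
  assumes s: "\<sigma> \<in> signed_perms n" and p: "p \<in> {1..2*n}"
  shows "int (piOf n \<sigma> p) = hh n (uu n \<sigma> p)"
  using hh_range[OF uu_nz[OF s p] uu_le[OF s p]] p by (simp add: piOf_def)

lemma rhs_to_lhs:
  assumes s: "\<sigma> \<in> signed_perms n" and np: "\<not> pats n \<sigma>"
  shows "piOf n \<sigma> \<in> SC321 n" "Theta n (piOf n \<sigma>) = \<sigma>"
proof -
  let ?\<pi> = "piOf n \<sigma>"
  have ri: "\<And>p. p \<in> {1..2*n} \<Longrightarrow> int (?\<pi> p) = hh n (uu n \<sigma> p)" using piOf_int[OF s] by blast
  have inj: "inj_on ?\<pi> {1..2*n}"
  proof (rule inj_onI)
    fix p q assume p: "p \<in> {1..2*n}" and q: "q \<in> {1..2*n}" and e: "?\<pi> p = ?\<pi> q"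
    then have "hh n (uu n \<sigma> p) = hh n (uu n \<sigma> q)" using ri by metis
    then have "uu n \<sigma> p = uu n \<sigma> q" using hh_eq uu_nz[OF s p] uu_nz[OF s q] by blast
    then show "p = q" using uu_inj[OF s p q] by blast
  qed
  have im: "?\<pi> ` {1..2*n} \<subseteq> {1..2*n}"
  proof
    fix x assume "x \<in> ?\<pi> ` {1..2*n}"
    then obtain p where p: "p \<in> {1..2*n}" and x: "x = ?\<pi> p" by blast
    have "1 \<le> hh n (uu n \<sigma> p) \<and> hh n (uu n \<sigma> p) \<le> 2 * int n"
      using hh_range[OF uu_nz[OF s p] uu_le[OF s p]] .
    then show "x \<in> {1..2*n}" using ri[OF p] x by auto
  qed
  have perm: "?\<pi> permutes {1..2*n}"
    by (rule bij_imp_permutes[OF endo_bij[OF inj im]]) (auto simp: piOf_def)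
  have cs: "centrosymmetric ?\<pi> (2*n)" unfolding centrosymmetric_def
  proof
    fix p assume p: "p \<in> {1..2*n}"
    have p': "2*n+1-p \<in> {1..2*n}" using p by auto
    have "int (?\<pi> p) + int (?\<pi> (2*n+1-p)) = 2 * int n + 1"
      using ri[OF p] ri[OF p'] uu_sym[OF p, of \<sigma>] hh_neg[OF uu_nz[OF s p]] by simp
    then show "?\<pi> p + ?\<pi> (2*n+1-p) = 2*n+1" by linarith
  qed
  have av: "avoids321 ?\<pi> (2*n)"
  proof -
    have nz': "\<And>i. 1\<le>i \<Longrightarrow> i\<le>n \<Longrightarrow> \<sigma> i \<noteq> 0" using sp_nz[OF s] by simp
    have inj': "\<And>i j. 1\<le>i \<Longrightarrow> i\<le>n \<Longrightarrow> 1\<le>j \<Longrightarrow> j\<le>n \<Longrightarrow> \<bar>\<sigma> i\<bar> = \<bar>\<sigma> j\<bar> \<Longrightarrow> i = j"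
      using sp_inj[OF s] by simp
    have "\<not> (caseA n \<sigma> \<or> caseB n \<sigma>)"
      using imp_pats[of n \<sigma>, OF nz' inj'] np by blast
    then have "\<not> u321 n \<sigma>" using u321_iff by blast
    then show ?thesis using avoid_equiv[of n ?\<pi> \<sigma>] ri uu_nz[OF s] by blast
  qed
  show "?\<pi> \<in> SC321 n" unfolding SC321_def using perm cs av by blast
  show "Theta n ?\<pi> = \<sigma>"
  proof
    fix i
    show "Theta n ?\<pi> i = \<sigma> i"
    proof (cases "i \<in> {1..n}")
      case True
      have ni: "n+i \<in> {1..2*n}" using True by auto
      have u: "uu n \<sigma> (n+i) = \<sigma> i" using True by (simp add: uu_def)
      have "int (?\<pi> (n+i)) = hh n (\<sigma> i)" using ri[OF ni] u by simp
      then show ?thesis using True sp_nz[OF s True] by (auto simp: Theta_def hh_def)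
    next
      case False
      then show ?thesis using sp_zero[OF s False] by (simp add: Theta_def)
    qed
  qed
qed

lemma abs_cases: "\<bar>a::int\<bar> = \<bar>b\<bar> \<Longrightarrow> a = b \<or> a = - b"
  by (auto simp: abs_if split: if_splits)

lemma lhs_to_rhs:
  assumes pi: "\<pi> \<in> SC321 n"
  shows "Theta n \<pi> \<in> signed_perms n" "\<not> pats n (Theta n \<pi>)"
proof -
  let ?\<sigma> = "Theta n \<pi>"
  have perm: "\<pi> permutes {1..2*n}" and av: "avoids321 \<pi> (2*n)" and cs: "centrosymmetric \<pi> (2*n)"
    using pi unfolding SC321_def by auto
  have rng: "\<pi> p \<in> {1..2*n} \<longleftrightarrow> p \<in> {1..2*n}" for p using permutes_in_image[OF perm] .
  have csp: "\<pi> p + \<pi> (2*n+1-p) = 2*n+1" if "p \<in> {1..2*n}" for p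
    using cs that unfolding centrosymmetric_def by auto
  have K1: "hh n (?\<sigma> i) = int (\<pi> (n+i)) \<and> ?\<sigma> i \<noteq> 0 \<and> \<bar>?\<sigma> i\<bar> \<le> int n" if i: "i \<in> {1..n}" for i
  proof -
    have "\<pi> (n+i) \<in> {1..2*n}" using rng[of "n+i"] i by auto
    then show ?thesis using i by (auto simp: Theta_def hh_def)
  qed
  have U: "int (\<pi> p) = hh n (uu n ?\<sigma> p)" if p: "p \<in> {1..2*n}" for p
  proof (cases "p \<le> n")
    case True
    have a: "n+1-p \<in> {1..n}" using p True by auto
    have e: "n + (n+1-p) = 2*n+1-p" using True by auto
    have "hh n (uu n ?\<sigma> p) = hh n (- ?\<sigma> (n+1-p))" using True by (simp add: uu_def)
    also have "\<dots> = 2 * int n + 1 - hh n (?\<sigma> (n+1-p))" using hh_neg[of "?\<sigma> (n+1-p)" n] K1[OF a] by linarith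
    also have "\<dots> = 2 * int n + 1 - int (\<pi> (2*n+1-p))" using K1[OF a] e by simp
    also have "\<dots> = int (\<pi> p)" using csp[OF p] by linarith
    finally show ?thesis by simp
  next
    case False
    have a: "p-n \<in> {1..n}" using p False by auto
    have "hh n (uu n ?\<sigma> p) = hh n (?\<sigma> (p-n))" using False by (simp add: uu_def)
    also have "\<dots> = int (\<pi> p)" using K1[OF a] False by simp
    finally show ?thesis by simp
  qed
  have unz: "uu n ?\<sigma> p \<noteq> 0" if p: "p \<in> {1..2*n}" for p
  proof (cases "p \<le> n")
    case True
    have a: "n+1-p \<in> {1..n}" using p True by auto
    then show ?thesis using K1[OF a] True by (simp add: uu_def)
  next
    case False
    have a: "p-n \<in> {1..n}" using p False by auto
    then show ?thesis using K1[OF a] False by (simp add: uu_def)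
  qed
  have uinj: "p = q" if p: "p \<in> {1..2*n}" and q: "q \<in> {1..2*n}" and e: "uu n ?\<sigma> p = uu n ?\<sigma> q" for p q
  proof -
    have "int (\<pi> p) = int (\<pi> q)" using U[OF p] U[OF q] e by simp
    then have "\<pi> p = \<pi> q" by simp
    then show ?thesis using permutes_inj[OF perm] unfolding inj_def by blast
  qed
  have absinj: "i = j" if i: "i \<in> {1..n}" and j: "j \<in> {1..n}" and e: "\<bar>?\<sigma> i\<bar> = \<bar>?\<sigma> j\<bar>" for i j
  proof -
    have ui: "uu n ?\<sigma> (n+i) = ?\<sigma> i" "uu n ?\<sigma> (n+j) = ?\<sigma> j" using i j by (auto simp: uu_def)
    have uj: "uu n ?\<sigma> (n+1-j) = - ?\<sigma> j" using j by (auto simp: uu_def)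
    have m: "n+i \<in> {1..2*n}" "n+j \<in> {1..2*n}" "n+1-j \<in> {1..2*n}" using i j by auto
    from abs_cases[OF e] consider "?\<sigma> i = ?\<sigma> j" | "?\<sigma> i = - ?\<sigma> j" by blast
    then show ?thesis
    proof cases
      case 1
      then have "n+i = n+j" using uinj[OF m(1) m(2)] ui by simp
      then show ?thesis by simp
    next
      case 2
      then have "n+i = n+1-j" using uinj[OF m(1) m(3)] ui uj by simp
      then show ?thesis using i j by auto
    qed
  qed
  have bij: "bij_betw (\<lambda>i. nat \<bar>?\<sigma> i\<bar>) {1..n} {1..n}"
  proof (rule endo_bij)
    show "inj_on (\<lambda>i. nat \<bar>?\<sigma> i\<bar>) {1..n}"
    proof (rule inj_onI)
      fix i j assume "i \<in> {1..n}" "j \<in> {1..n}" "nat \<bar>?\<sigma> i\<bar> = nat \<bar>?\<sigma> j\<bar>"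
      then have "\<bar>?\<sigma> i\<bar> = \<bar>?\<sigma> j\<bar>" by simp
      then show "i = j" using absinj \<open>i \<in> {1..n}\<close> \<open>j \<in> {1..n}\<close> by blast
    qed
    show "(\<lambda>i. nat \<bar>?\<sigma> i\<bar>) ` {1..n} \<subseteq> {1..n}"
    proof
      fix x assume "x \<in> (\<lambda>i. nat \<bar>?\<sigma> i\<bar>) ` {1..n}"
      then obtain i where i: "i \<in> {1..n}" and x: "x = nat \<bar>?\<sigma> i\<bar>" by blast
      have "?\<sigma> i \<noteq> 0" "\<bar>?\<sigma> i\<bar> \<le> int n" using K1[OF i] by blast+
      then have "1 \<le> nat \<bar>?\<sigma> i\<bar>" "nat \<bar>?\<sigma> i\<bar> \<le> n" by linarith+
      then show "x \<in> {1..n}" using x by simp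
    qed
  qed
  have z: "\<forall>i. i \<notin> {1..n} \<longrightarrow> ?\<sigma> i = 0" by (simp add: Theta_def)
  have nz: "\<forall>i\<in>{1..n}. ?\<sigma> i \<noteq> 0" using K1 by blast
  show sp: "?\<sigma> \<in> signed_perms n" unfolding signed_perms_def
    using bij z nz by blast
  have "\<not> u321 n ?\<sigma>" using avoid_equiv[of n \<pi> ?\<sigma>] U unz av by blast
  then show "\<not> pats n ?\<sigma>" using u321_iff pats_imp by blast
qed

theorem mainTheorem11:
  fixes n :: nat
  assumes "n \<ge> 1"
  shows "Theta n ` SC321 n =
    {\<sigma> \<in> signed_perms n.
       avoids_pattern n \<sigma> [3, 2, 1] \<and> avoids_pattern n \<sigma> [-3, 2, 1] \<and>
       avoids_pattern n \<sigma> [3, 2, -1] \<and> avoids_pattern n \<sigma> [-3, 2, -1] \<and>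
       avoids_pattern n \<sigma> [1, -2] \<and> avoids_pattern n \<sigma> [-1, -2]}"
proof (intro equalityI subsetI)
  fix x assume "x \<in> Theta n ` SC321 n"
  then obtain \<pi> where pi: "\<pi> \<in> SC321 n" and x: "x = Theta n \<pi>" by blast
  show "x \<in> {\<sigma> \<in> signed_perms n.
       avoids_pattern n \<sigma> [3, 2, 1] \<and> avoids_pattern n \<sigma> [-3, 2, 1] \<and>
       avoids_pattern n \<sigma> [3, 2, -1] \<and> avoids_pattern n \<sigma> [-3, 2, -1] \<and>
       avoids_pattern n \<sigma> [1, -2] \<and> avoids_pattern n \<sigma> [-1, -2]}"
    using lhs_to_rhs[OF pi] x unfolding avoids_pattern_def pats_def by blast
next
  fix \<sigma> assume "\<sigma> \<in> {\<sigma> \<in> signed_perms n.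
       avoids_pattern n \<sigma> [3, 2, 1] \<and> avoids_pattern n \<sigma> [-3, 2, 1] \<and>
       avoids_pattern n \<sigma> [3, 2, -1] \<and> avoids_pattern n \<sigma> [-3, 2, -1] \<and>
       avoids_pattern n \<sigma> [1, -2] \<and> avoids_pattern n \<sigma> [-1, -2]}"
  then have s: "\<sigma> \<in> signed_perms n" and np: "\<not> pats n \<sigma>"
    unfolding avoids_pattern_def pats_def by auto
  show "\<sigma> \<in> Theta n ` SC321 n"
    using rhs_to_lhs[OF s np] by (metis image_eqI)
qed
end
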